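(* Let $\mathbf{H}$ be a hyperplane in $\mathbb{R}^n$ whose $\beta$-neighborhood contains a subset $S$ of vertices of $\{-1,1\}^n$ with $|S|=\alpha\cdot 2^n$. Then there exists a hyperplane which passes through all the points of $\{-1,1\}^n\cup\{0,1\}^n$ that are contained in the $\beta$-neighborhood of $\mathbf{H}$, provided that $$0\le\beta\le\Big((2/\alpha)\cdot n^{5+\lfloor\log(n/\alpha)\rfloor}\cdot(2+\lfloor\log(n/\alpha)\rfloor)!\Big)^{-1}.$$
   Context: The $\beta$-neighborhood of a hyperplane $\mathbf{H}$ in $\mathbb{R}^n$ is the set of points at Euclidean distance at most $\beta$ from $\mathbf{H}$. Logarithms are base 2. *)

theory Defs
  imports "HOL-Analysis.Analysis"
begin

definition is_hyperplane :: "(real ^ 'n) set \<Rightarrow> bool" where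
  "is_hyperplane H \<longleftrightarrow> (\<exists>a b. a \<noteq> 0 \<and> H = {x. a \<bullet> x = b})"

definition neighborhood :: "(real ^ 'n) set \<Rightarrow> real \<Rightarrow> (real ^ 'n) set" where
  "neighborhood H \<beta> = {x. infdist x H \<le> \<beta>}"

definition cube_pm :: "(real ^ 'n) set" where
  "cube_pm = {x. \<forall>i. x $ i = -1 \<or> x $ i = 1}"

definition cube01 :: "(real ^ 'n) set" where
  "cube01 = {x. \<forall>i. x $ i = 0 \<or> x $ i = 1}"

end

theory Submission
  imports Defs
begin


lemma det_bound_perm:
  fixes M :: "real^'n^'n" and J :: "'n set"
  assumes k: "k \<in> J"
    and out: "\<And>i j. i \<notin> J \<Longrightarrow> M$i$j = (if j = i then 1 else 0)"
    and colk: "\<And>i. i\<in>J \<Longrightarrow> \<bar>M$i$k\<bar> \<le> \<eta>"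
    and other: "\<And>i j. i\<in>J \<Longrightarrow> j\<in>J \<Longrightarrow> j \<noteq> k \<Longrightarrow> \<bar>M$i$j\<bar> \<le> B"
    and B0: "0 \<le> B"
  shows "\<bar>det M\<bar> \<le> fact (card J) * (B^(card J - 1) * \<eta>)"
proof -
  have eta0: "0 \<le> \<eta>" using colk[OF k] by linarith
  let ?f = "\<lambda>p. of_int (sign p) * prod (\<lambda>i. M$i$p i) (UNIV :: 'n set)"
  have zero: "?f p = 0" if "p \<in> {p. p permutes UNIV} - {p. p permutes J}" for p
  proof -
    from that have "\<not> p permutes J" by auto
    moreover have "p permutes UNIV" using that by auto
    ultimately obtain i where i: "i \<notin> J" "p i \<noteq> i"
      unfolding permutes_def by auto
    have "M$i$p i = 0" using out[OF i(1)] i(2) by simp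
    then show ?thesis by (simp add: prod_zero_iff) (metis i(2))
  qed
  have "det M = sum ?f {p. p permutes J}"
    unfolding det_def
    by (rule sum.mono_neutral_right) (use zero in \<open>auto intro: permutes_subset\<close>)
  also have "\<bar>\<dots>\<bar> \<le> sum (\<lambda>p. \<bar>?f p\<bar>) {p. p permutes J}" by (rule sum_abs)
  also have "\<dots> \<le> sum (\<lambda>p. B^(card J - 1) * \<eta>) {p. p permutes J}"
  proof (rule sum_mono)
    fix p assume "p \<in> {p. p permutes J}"
    then have p: "p permutes J" by simp
    have fin: "finite J" by simp
    have "\<bar>?f p\<bar> = (\<Prod>i\<in>UNIV. \<bar>M$i$p i\<bar>)"
      by (simp add: abs_mult abs_prod sign_def)
    also have "\<dots> = (\<Prod>i\<in>J. \<bar>M$i$p i\<bar>)"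
      by (rule prod.mono_neutral_right) (use out permutes_not_in[OF p] in auto)
    also have "J = insert (inv p k) (J - {inv p k})"
      using k permutes_in_image[OF permutes_inv[OF p]] by auto
    also have "(\<Prod>i\<in>insert (inv p k) (J - {inv p k}). \<bar>M$i$p i\<bar>)
          = \<bar>M$(inv p k)$p (inv p k)\<bar> * (\<Prod>i\<in>J - {inv p k}. \<bar>M$i$p i\<bar>)"
      by (rule prod.insert) auto
    also have "\<dots> \<le> \<eta> * B^(card J - 1)"
    proof (rule mult_mono)
      have "inv p k \<in> J" using k permutes_in_image[OF permutes_inv[OF p]] by auto
      then show "\<bar>M$(inv p k)$p (inv p k)\<bar> \<le> \<eta>"
        using colk permutes_inverses(1)[OF p] by metis
      have "(\<Prod>i\<in>J - {inv p k}. \<bar>M$i$p i\<bar>) \<le> (\<Prod>i\<in>J - {inv p k}. B)"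
      proof (rule prod_mono)
        fix i assume i: "i \<in> J - {inv p k}"
        have "p i \<in> J" using i permutes_in_image[OF p] by auto
        moreover have "p i \<noteq> k" using i permutes_inverses(2)[OF p, of i] by auto
        ultimately show "0 \<le> \<bar>M$i$p i\<bar> \<and> \<bar>M$i$p i\<bar> \<le> B" using other i by auto
      qed
      also have "\<dots> = B^(card J - 1)"
        using k by (simp add: card_Diff_singleton \<open>inv p k \<in> J\<close>)
      finally show "(\<Prod>i\<in>J - {inv p k}. \<bar>M$i$p i\<bar>) \<le> B^(card J - 1)" .
    qed (use eta0 in \<open>auto intro: prod_nonneg\<close>)
    finally show "\<bar>?f p\<bar> \<le> B^(card J - 1) * \<eta>" by (simp add: mult.commute)
  qed
  also have "\<dots> = fact (card J) * (B^(card J - 1) * \<eta>)"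
    by (simp add: card_permutations)
  finally show ?thesis .
qed


lemma cramer_bound:
  fixes w :: "real^'n" and J :: "'n set" and Y :: "(real^'n) set"
  assumes wJ: "\<And>i. i \<notin> J \<Longrightarrow> w$i = 0"
    and Yint: "\<And>y i. y \<in> Y \<Longrightarrow> y$i \<in> \<int>"
    and Ybd: "\<And>y i. y \<in> Y \<Longrightarrow> \<bar>y$i\<bar> \<le> Bd"
    and Yw: "\<And>y. y \<in> Y \<Longrightarrow> \<bar>w \<bullet> y\<bar> \<le> \<eta>"
    and spn: "span (Y \<union> (\<lambda>i. axis i 1) ` (UNIV - J)) = UNIV"
    and Bd0: "0 \<le> Bd" and eta0: "0 \<le> \<eta>"
  shows "\<bar>w$k\<bar> \<le> fact (card J) * (Bd^(card J - 1) * \<eta>)"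
proof -
  define Ax where "Ax = (\<lambda>i. axis i (1::real)) ` (UNIV - J)"
  have "Ax \<subseteq> Basis" unfolding Ax_def by (auto simp: axis_in_Basis_iff)
  then have indAx: "independent Ax" using independent_Basis independent_mono by blast
  obtain B where AxB: "Ax \<subseteq> B" and BY: "B \<subseteq> Y \<union> Ax" and indB: "independent B"
    and YB: "Y \<union> Ax \<subseteq> span B"
    using real_vector.maximal_independent_subset_extend[of Ax "Y \<union> Ax", OF _ indAx] by blast
  have spanB: "UNIV \<subseteq> span B"
  proof -
    have "span (Y \<union> Ax) \<subseteq> span B" using YB by (metis span_mono span_span)
    then show ?thesis using spn unfolding Ax_def by simp
  qed
  have finB: "finite B" using indB independent_bound by blast
  have cardB: "card B = CARD('n)"
    using basis_card_eq_dim[of B UNIV] spanB indB by simp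
  have injax: "inj_on (\<lambda>i. axis i (1::real)) (UNIV - J)"
    by (auto simp: inj_on_def axis_eq_axis)
  have cardAx: "card Ax = CARD('n) - card J"
  proof -
    have "card Ax = card (UNIV - J)" unfolding Ax_def by (rule card_image[OF injax])
    also have "\<dots> = card (UNIV::'n set) - card J" by (rule card_Diff_subset) auto
    finally show ?thesis .
  qed
  define B' where "B' = B - Ax"
  have cardJ: "card J \<le> CARD('n)" by (rule card_mono) auto
  have cardB': "card B' = card J"
  proof -
    have finAx: "finite Ax" using AxB finB finite_subset by blast
    have "card B' = card B - card Ax" unfolding B'_def by (rule card_Diff_subset[OF finAx AxB])
    then show ?thesis using cardB cardAx cardJ by simp
  qed
  have B'Y: "B' \<subseteq> Y" using BY unfolding B'_def by auto
  have finB': "finite B'" using finB unfolding B'_def by simp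
  obtain g where g: "bij_betw g J B'"
    using finite_same_card_bij[of J B'] finB' cardB' by auto
  define A :: "real^'n^'n" where "A = (\<chi> i. if i \<in> J then g i else axis i 1)"
  have Ai: "A$i = (if i \<in> J then g i else axis i 1)" for i unfolding A_def by simp
  have gY: "i \<in> J \<Longrightarrow> g i \<in> Y" for i using g B'Y by (auto simp: bij_betw_def)
  have gAx: "i \<in> J \<Longrightarrow> g i \<notin> Ax" for i using g by (auto simp: bij_betw_def B'_def)
  have injA: "inj (\<lambda>i. A$i)"
  proof (rule injI)
    fix i j assume eq: "A$i = A$j"
    show "i = j"
    proof (cases "i \<in> J"; cases "j \<in> J")
      assume "i \<in> J" "j \<in> J" then show ?thesis using eq g by (auto simp: Ai bij_betw_def inj_on_def)
    next
      assume ij: "i \<in> J" "j \<notin> J"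
      then have "g i = axis j 1" using eq by (simp add: Ai)
      moreover have "axis j 1 \<in> Ax" using ij by (auto simp: Ax_def)
      ultimately show ?thesis using gAx[of i] ij by simp
    next
      assume ij: "i \<notin> J" "j \<in> J"
      then have "g j = axis i 1" using eq by (simp add: Ai)
      moreover have "axis i 1 \<in> Ax" using ij by (auto simp: Ax_def)
      ultimately show ?thesis using gAx[of j] ij by simp
    next
      assume "i \<notin> J" "j \<notin> J" then show ?thesis using eq by (auto simp: Ai axis_eq_axis)
    qed
  qed
  have imA: "range (\<lambda>i. A$i) = B"
  proof -
    have "(\<lambda>i. A$i) ` J = B'" using g by (simp add: Ai bij_betw_def)
    moreover have "(\<lambda>i. A$i) ` (UNIV - J) = Ax" by (auto simp: Ai Ax_def)
    moreover have "B = B' \<union> Ax" using AxB unfolding B'_def by auto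
    moreover have "range (\<lambda>i. A$i) = (\<lambda>i. A$i) ` J \<union> (\<lambda>i. A$i) ` (UNIV - J)" by auto
    ultimately show ?thesis by simp
  qed
  have dA: "det A \<noteq> 0"
  proof -
    have "\<forall>c. sum (\<lambda>i. c i *s row i A) UNIV = 0 \<longrightarrow> (\<forall>i. c i = 0)"
    proof (rule allI, rule impI)
      fix c :: "'n \<Rightarrow> real" assume c: "sum (\<lambda>i. c i *s row i A) UNIV = 0"
      have rowA: "row i A = A$i" for i by (simp add: row_def vec_eq_iff)
      define d where "d v = c (inv (\<lambda>i. A$i) v)" for v
      have "(\<Sum>v\<in>B. d v *\<^sub>R v) = (\<Sum>i\<in>UNIV. d (A$i) *\<^sub>R A$i)"
        by (subst imA[symmetric]) (rule sum.reindex[OF injA[unfolded inj_on_def, folded inj_on_def], unfolded o_def])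
      also have "\<dots> = (\<Sum>i\<in>UNIV. c i *\<^sub>R A$i)"
        unfolding d_def using injA by (simp add: inv_f_f)
      also have "\<dots> = 0" using c by (simp add: rowA scalar_mult_eq_scaleR)
      finally have "(\<Sum>v\<in>B. d v *\<^sub>R v) = 0" .
      then have "\<forall>v\<in>B. d v = 0" using indB by (simp add: independent_explicit)
      then show "\<forall>i. c i = 0" using imA injA unfolding d_def by (auto simp: inv_f_f)
    qed
    then have "invertible A"
      using matrix_right_invertible_independent_rows invertible_right_inverse by blast
    then show ?thesis by (simp add: invertible_det_nz)
  qed
  have Aint: "A$i$j \<in> \<int>" for i j
    using Yint[OF gY] by (cases "i \<in> J") (auto simp: Ai axis_def)
  have "det A \<in> \<int>"
    unfolding det_def using Aint
    by (intro Ints_sum Ints_mult Ints_prod) auto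
  then have dA1: "\<bar>det A\<bar> \<ge> 1" using dA Ints_nonzero_abs_ge1 by blast
  define v where "v = A *v w"
  have vi: "v$i = (if i \<in> J then g i \<bullet> w else 0)" for i
    unfolding v_def matrix_vector_mul_component using wJ by (auto simp: Ai inner_axis')
  have vbd: "i \<in> J \<Longrightarrow> \<bar>v$i\<bar> \<le> \<eta>" for i
    using Yw[OF gY] by (simp add: vi inner_commute)
  have wc: "w = (\<chi> k. det(\<chi> i j. if j=k then v$i else A$i$j) / det A)"
    using cramer[OF dA, of w v] v_def by simp
  show ?thesis
  proof (cases "k \<in> J")
    case False
    then show ?thesis using wJ eta0 Bd0 by simp
  next
    case True
    define M :: "real^'n^'n" where "M = (\<chi> i j. if j=k then v$i else A$i$j)"
    have "\<bar>det M\<bar> \<le> fact (card J) * (Bd^(card J - 1) * \<eta>)"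
    proof (rule det_bound_perm[OF True])
      show "M$i$j = (if j = i then 1 else 0)" if "i \<notin> J" for i j
        using that True by (auto simp: M_def vi Ai axis_def)
      show "\<bar>M$i$k\<bar> \<le> \<eta>" if "i \<in> J" for i using vbd[OF that] by (simp add: M_def)
      show "\<bar>M$i$j\<bar> \<le> Bd" if "i \<in> J" "j \<in> J" "j \<noteq> k" for i j
        using that Ybd[OF gY[OF that(1)]] by (simp add: M_def Ai)
    qed (rule Bd0)
    moreover have "w$k = det M / det A"
    proof -
      have "w$k = (\<chi> k. det(\<chi> i j. if j=k then v$i else A$i$j) / det A) $ k"
        using wc by (rule arg_cong)
      then show ?thesis unfolding M_def by (simp only: vec_lambda_beta)
    qed
    then have "\<bar>w$k\<bar> = \<bar>det M\<bar> / \<bar>det A\<bar>" by (simp add: abs_divide)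
    moreover have "\<bar>det M\<bar> / \<bar>det A\<bar> \<le> \<bar>det M\<bar> / 1"
      using dA1 by (intro divide_left_mono) auto
    ultimately show ?thesis by linarith
  qed
qed



lemma final_arith:
  fixes N m kk :: nat and \<alpha> \<beta> :: real
  assumes N1: "N \<ge> 1" and mk: "m \<le> kk" and a0: "0 < \<alpha>" and am: "\<alpha> * 2^m \<le> 1"
    and b0: "0 \<le> \<beta>" and bb: "\<beta> \<le> inverse ((2/\<alpha>) * real N ^ (5+kk) * fact (2+kk))"
  shows "real N * (real m * (fact m * ((2 * real N)^(m-1) * (2*(real N+1)*\<beta>))) + \<beta>) < 1"
proof -
  define X where "X = real N ^ (5+kk)"
  define F :: real where "F = fact (2+kk)"
  have Npos: "real N \<ge> 1" using N1 by simp
  have X1: "X \<ge> real N" unfolding X_def using Npos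
    by (metis le_add1 power_increasing power_one_right add.commute one_le_numeral le_add2 order_trans power_one_right)
  have XN: "X \<ge> real N ^ (m+1)" unfolding X_def using Npos mk by (intro power_increasing) auto
  have X0: "X > 0" using X1 Npos by linarith
  have F2: "F \<ge> 2 * fact (kk+1)" unfolding F_def
    by (simp add: fact_Suc[of "Suc kk"] algebra_simps)
  have fk: "fact (kk+1) \<ge> (1::real)" by (rule fact_ge_1)
  have F0: "F > 0" using F2 fk by linarith
  have bD: "\<beta> * (2*X*F) \<le> \<alpha>"
  proof -
    have "(2/\<alpha>) * real N ^ (5+kk) * fact (2+kk) = (2*X*F)/\<alpha>"
      unfolding X_def F_def by simp
    with bb have "\<beta> \<le> \<alpha> / (2*X*F)" by (metis inverse_divide)
    moreover have "0 < 2*X*F" using X0 F0 by simp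
    ultimately show ?thesis by (simp add: pos_le_divide_eq)
  qed
  have a1: "\<alpha> \<le> 1"
  proof -
    have "(1::real) \<le> 2^m" by simp
    then have "\<alpha> * 1 \<le> \<alpha> * 2^m" using a0 by (intro mult_left_mono) auto
    then show ?thesis using am by linarith
  qed
  have T2: "real N * \<beta> \<le> 1/4"
  proof -
    have "real N * \<beta> * (2*X*F) \<le> real N * \<alpha>" using bD Npos by (simp add: mult.assoc mult_left_mono)
    also have "\<dots> \<le> real N * 1" using a1 Npos by (intro mult_left_mono) auto
    also have "\<dots> \<le> X" using X1 by simp
    finally have "real N * \<beta> * (2*X*F) \<le> X" .
    moreover have "X * 4 \<le> 2*X*F"
    proof -
      have "F \<ge> 2" using F2 fk by linarith
      then have "X * 2 \<le> X * F" using X0 by (intro mult_left_mono) auto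
      then show ?thesis by linarith
    qed
    ultimately have "real N * \<beta> * (2*X*F) * 4 \<le> 2*X*F" by linarith
    then have "(real N * \<beta> * 4) * (2*X*F) \<le> 1 * (2*X*F)" by (simp add: mult_ac)
    then have "real N * \<beta> * 4 \<le> 1" by (rule mult_right_le_imp_le) (use X0 F0 in simp)
    then show ?thesis by simp
  qed
  have T1: "real N * (real m * (fact m * ((2 * real N)^(m-1) * (2*(real N+1)*\<beta>)))) \<le> 1/2"
  proof (cases "m = 0")
    case True then show ?thesis by simp
  next
    case False
    have eq: "real N * (real m * (fact m * ((2 * real N)^(m-1) * (2*(real N+1)*\<beta>))))
       = (real m * fact m) * (real N ^ m * (real N + 1)) * (2^m * \<beta>)"
    proof -
      obtain m' where m': "m = Suc m'" using False by (cases m) auto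
      show ?thesis unfolding m' by (simp add: power_mult_distrib algebra_simps)
    qed
    have mm: "real m * fact m \<le> fact (kk+1)"
    proof -
      have "real m * fact m \<le> fact (m+1)" by (simp add: algebra_simps)
      also have "(fact (m+1)::real) \<le> fact (kk+1)" using mk by (intro fact_mono) auto
      finally show ?thesis .
    qed
    have nn: "real N ^ m * (real N + 1) \<le> 2 * X"
    proof -
      have "real N ^ m * (real N + 1) \<le> real N ^ m * (2 * real N)"
        using Npos by (intro mult_left_mono) auto
      also have "\<dots> = 2 * real N ^ (m+1)" by simp
      finally show ?thesis using XN by linarith
    qed
    have bm: "2^m * \<beta> * (2*X*F) \<le> 1"
    proof -
      have "2^m * \<beta> * (2*X*F) = 2^m * (\<beta> * (2*X*F))" by simp
      also have "\<dots> \<le> 2^m * \<alpha>" using bD by (intro mult_left_mono) auto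
      finally have "2^m * \<beta> * (2*X*F) \<le> 2^m * \<alpha>" .
      moreover have "2^m * \<alpha> \<le> 1" using am by (simp add: mult.commute)
      ultimately show ?thesis by linarith
    qed
    have "(real m * fact m) * (real N ^ m * (real N + 1)) \<le> fact (kk+1) * (2*X)"
      by (rule mult_mono[OF mm nn]) auto
    also have "\<dots> = (2 * fact (kk+1)) * X" by simp
    also have "\<dots> \<le> F * X" using F2 X0 by (intro mult_right_mono) auto
    finally have A: "(real m * fact m) * (real N ^ m * (real N + 1)) \<le> F * X" .
    define Z where "Z = (real m * fact m) * (real N ^ m * (real N + 1)) * (2^m * \<beta>)"
    define W where "W = (real m * fact m) * (real N ^ m * (real N + 1))"
    have W0: "W \<ge> 0" unfolding W_def by simp
    have "Z * (2*X*F) = W * (2^m * \<beta> * (2*X*F))" unfolding Z_def W_def by (simp add: mult_ac)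
    also have "\<dots> \<le> W * 1" using bm W0 by (intro mult_left_mono) auto
    also have "\<dots> \<le> F * X" using A unfolding W_def by simp
    finally have "Z * (2*X*F) \<le> F * X" .
    then have "(Z*2) * (F*X) \<le> 1 * (F*X)" by (simp add: mult_ac)
    then have "Z*2 \<le> 1" by (rule mult_right_le_imp_le) (use X0 F0 in simp)
    then have "Z \<le> 1/2" by simp
    then have "(real m * fact m) * (real N ^ m * (real N + 1)) * (2^m * \<beta>) \<le> 1/2" unfolding Z_def .
    then show ?thesis by (subst eq)
  qed
  show ?thesis using T1 T2 by (simp add: distrib_left)
qed


lemma near_hyp:
  fixes a x :: "real^'n"
  assumes a0: "a \<noteq> 0" and x: "x \<in> neighborhood {y. a \<bullet> y = b} \<beta>"
  shows "\<bar>a \<bullet> x - b\<bar> \<le> \<beta> * norm a"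
proof -
  let ?H = "{y. a \<bullet> y = b}"
  have "(b / (a \<bullet> a)) *\<^sub>R a \<in> ?H" using a0 by simp
  then have ne: "?H \<noteq> {}" by blast
  obtain h where h: "h \<in> ?H" "infdist x ?H = dist x h"
    using infdist_attains_inf[OF closed_hyperplane ne] by blast
  have "\<bar>a \<bullet> x - b\<bar> = \<bar>a \<bullet> (x - h)\<bar>" using h(1) by (simp add: inner_diff_right)
  also have "\<dots> \<le> norm a * norm (x - h)" by (rule Cauchy_Schwarz_ineq2)
  also have "\<dots> = norm a * infdist x ?H" using h(2) by (simp add: dist_norm)
  also have "\<dots> \<le> norm a * \<beta>" using x unfolding neighborhood_def by (intro mult_left_mono) auto
  finally show ?thesis by (simp add: mult.commute)
qed

theorem theorem45:
  fixes H S :: "(real ^ 'n) set" and \<alpha> \<beta> :: real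
  assumes "is_hyperplane H"
    and "S \<subseteq> cube_pm" and "S \<subseteq> neighborhood H \<beta>"
    and "0 < \<alpha>" and "real (card S) = \<alpha> * 2 ^ CARD('n)"
    and "0 \<le> \<beta>"
    and "\<beta> \<le> inverse ((2 / \<alpha>) * real CARD('n) ^ (5 + nat \<lfloor>log 2 (real CARD('n) / \<alpha>)\<rfloor>)
                  * fact (2 + nat \<lfloor>log 2 (real CARD('n) / \<alpha>)\<rfloor>))"
  shows "\<exists>H'. is_hyperplane H' \<and> (cube_pm \<union> cube01) \<inter> neighborhood H \<beta> \<subseteq> H'"
proof -
  obtain a b where a0: "a \<noteq> 0" and Hab: "H = {x. a \<bullet> x = b}"
    using assms(1) unfolding is_hyperplane_def by blast
  define N where "N = CARD('n)"
  define kk where "kk = nat \<lfloor>log 2 (real N / \<alpha>)\<rfloor>"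
  define \<eta>0 where "\<eta>0 = \<beta> * norm a"
  have N1: "N \<ge> 1" unfolding N_def by (simp add: Suc_le_eq)
  have na: "norm a > 0" using a0 by simp
  have eta0: "\<eta>0 \<ge> 0" unfolding \<eta>0_def using assms(6) by simp
  have near: "\<bar>a \<bullet> x - b\<bar> \<le> \<eta>0" if "x \<in> neighborhood H \<beta>" for x
    using near_hyp[OF a0, of x b \<beta>] that unfolding Hab \<eta>0_def by simp
  define G :: "(real^'n) set" where "G = cube_pm \<union> cube01"
  have grid: "x$i \<in> \<int> \<and> \<bar>x$i\<bar> \<le> 1" if "x \<in> G" for x i
  proof -
    have "x$i = -1 \<or> x$i = 1 \<or> x$i = 0" using that unfolding G_def cube_pm_def cube01_def by auto
    then show ?thesis by auto
  qed
  define sa where "sa e = (\<Sum>i\<in>UNIV. of_int (e i) * a$i)" for e :: "'n \<Rightarrow> int"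
  define adm where "adm J e \<longleftrightarrow> (\<forall>i. \<bar>e i\<bar> \<le> 1) \<and> (\<forall>i. i \<notin> J \<longrightarrow> e i = 0) \<and> (\<exists>i. e i \<noteq> 0)"
    for J :: "'n set" and e :: "'n \<Rightarrow> int"
  define dissoc where "dissoc J \<longleftrightarrow> (\<forall>e. adm J e \<longrightarrow> \<eta>0 < \<bar>sa e\<bar>)" for J
  have d0: "dissoc {}" unfolding dissoc_def adm_def by auto
  have bnd: "\<forall>y. (\<exists>J. dissoc J \<and> card J = y) \<longrightarrow> y \<le> N"
    unfolding N_def by (auto intro: card_mono)
  obtain m where "\<exists>J. dissoc J \<and> card J = m" and mmax: "\<forall>y. (\<exists>J. dissoc J \<and> card J = y) \<longrightarrow> y \<le> m"
    using Nat.ex_has_greatest_nat[of "\<lambda>m. \<exists>J. dissoc J \<and> card J = m" 0 N] d0 bnd by auto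
  then obtain J where dJ: "dissoc J" and cJ: "card J = m" by blast
  have maxJ: "\<not> dissoc (insert i J)" if "i \<notin> J" for i
  proof
    assume "dissoc (insert i J)"
    moreover have "card (insert i J) = m + 1" using that cJ by simp
    ultimately show False using mmax by fastforce
  qed
  have mN: "m \<le> N" unfolding N_def using cJ by (auto intro: card_mono)
  have cardS: "card S \<le> 2^(N - m)"
  proof -
    define r where "r x = restrict (\<lambda>i. x$i) (UNIV - J)" for x :: "real^'n"
    have inj: "inj_on r S"
    proof (rule inj_onI)
      fix x y assume x: "x \<in> S" and y: "y \<in> S" and rxy: "r x = r y"
      show "x = y"
      proof (rule ccontr)
        assume "x \<noteq> y"
        then obtain i0 where i0: "x$i0 \<noteq> y$i0" by (auto simp: vec_eq_iff)
        have xv: "x$i = -1 \<or> x$i = 1" for i using x assms(2) unfolding cube_pm_def by auto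
        have yv: "y$i = -1 \<or> y$i = 1" for i using y assms(2) unfolding cube_pm_def by auto
        have outJ: "x$i = y$i" if "i \<notin> J" for i
          using fun_cong[OF rxy, of i] that unfolding r_def by simp
        define e where "e i = (if x$i = y$i then 0 else if x$i = 1 then 1 else -1::int)" for i
        have e2: "of_int (e i) * 2 = x$i - y$i" for i
          using xv[of i] yv[of i] by (auto simp: e_def)
        have "adm J e" unfolding adm_def
        proof (intro conjI allI impI)
          show "\<bar>e i\<bar> \<le> 1" for i by (simp add: e_def)
          show "e i = 0" if "i \<notin> J" for i using outJ[OF that] by (simp add: e_def)
          show "\<exists>i. e i \<noteq> 0" using i0 by (auto simp: e_def intro!: exI[of _ i0])
        qed
        then have lt: "\<eta>0 < \<bar>sa e\<bar>" using dJ unfolding dissoc_def by blast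
        have "sa e * 2 = (\<Sum>i\<in>UNIV. a$i * (x$i - y$i))"
          unfolding sa_def sum_distrib_right by (rule sum.cong) (auto simp: e2[symmetric] mult_ac)
        also have "\<dots> = a \<bullet> x - a \<bullet> y"
          by (simp add: inner_vec_def algebra_simps sum_subtractf)
        finally have "sa e * 2 = a \<bullet> x - a \<bullet> y" .
        moreover have "\<bar>a \<bullet> x - b\<bar> \<le> \<eta>0" "\<bar>a \<bullet> y - b\<bar> \<le> \<eta>0"
          using near x y assms(3) by auto
        ultimately show False using lt by linarith
      qed
    qed
    have sub: "r ` S \<subseteq> PiE (UNIV - J) (\<lambda>_. {-1, 1::real})"
    proof
      fix z assume "z \<in> r ` S"
      then obtain x where x: "x \<in> S" "z = r x" by blast
      have "x$i = -1 \<or> x$i = 1" for i using x assms(2) unfolding cube_pm_def by auto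
      then show "z \<in> PiE (UNIV - J) (\<lambda>_. {-1, 1::real})" using x unfolding r_def by auto
    qed
    have "card S = card (r ` S)" using card_image[OF inj] by simp
    also have "\<dots> \<le> card (PiE (UNIV - J) (\<lambda>_. {-1, 1::real}))"
      by (rule card_mono[OF _ sub]) (simp add: finite_PiE)
    also have "\<dots> = 2 ^ card (UNIV - J)" by (simp add: card_PiE numeral_2_eq_2)
    also have "card (UNIV - J) = N - m" unfolding N_def using cJ by (simp add: card_Diff_subset)
    finally show ?thesis .
  qed
  have am: "\<alpha> * 2^m \<le> 1"
  proof -
    have "\<alpha> * 2^N \<le> 2^(N - m)" using cardS assms(5) unfolding N_def
      by (metis of_nat_le_iff of_nat_numeral of_nat_power)
    moreover have "(2::real)^N = 2^(N-m) * 2^m" using mN by (simp flip: power_add)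
    ultimately have "(\<alpha> * 2^m) * 2^(N-m) \<le> 1 * 2^(N-m)" by (simp add: mult_ac)
    then show ?thesis by (rule mult_right_le_imp_le) simp
  qed
  have mk: "m \<le> kk"
  proof -
    have "(2::real)^m \<le> 1 / \<alpha>" using am assms(4) by (simp add: field_simps)
    also have "\<dots> \<le> real N / \<alpha>" using N1 assms(4) by (simp add: divide_right_mono)
    finally have "2 powr (real m) \<le> real N / \<alpha>" by (simp add: powr_realpow)
    then have "real m \<le> log 2 (real N / \<alpha>)"
      using N1 assms(4) by (subst le_log_iff) auto
    then have "int m \<le> \<lfloor>log 2 (real N / \<alpha>)\<rfloor>" by (simp add: le_floor_iff)
    then show ?thesis unfolding kk_def by (metis nat_int nat_mono)
  qed
  have ex: "\<forall>i\<in>UNIV - J. \<exists>e. adm (insert i J) e \<and> \<bar>sa e\<bar> \<le> \<eta>0"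
    using maxJ unfolding dissoc_def by (auto simp: not_less)
  obtain E where E: "\<forall>i\<in>UNIV - J. adm (insert i J) (E i) \<and> \<bar>sa (E i)\<bar> \<le> \<eta>0"
    using bchoice[OF ex] by blast
  have Eii: "E i i = 1 \<or> E i i = -1" if iJ: "i \<notin> J" for i
  proof -
    have ad: "adm (insert i J) (E i)" and sb: "\<bar>sa (E i)\<bar> \<le> \<eta>0" using E iJ by auto
    have "E i i \<noteq> 0"
    proof
      assume z: "E i i = 0"
      have "adm J (E i)" using ad z unfolding adm_def by auto
      then have "\<eta>0 < \<bar>sa (E i)\<bar>" using dJ unfolding dissoc_def by blast
      then show False using sb by linarith
    qed
    moreover have "\<bar>E i i\<bar> \<le> 1" using ad unfolding adm_def by auto
    ultimately show ?thesis by linarith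
  qed
  define C :: "'n \<Rightarrow> 'n \<Rightarrow> real" where
    "C i j = (if i \<in> J then (if j = i then 1 else 0)
              else if j \<in> J then - of_int (E i i * E i j) else 0)" for i j
  have C1: "C i j \<in> \<int> \<and> \<bar>C i j\<bar> \<le> 1" for i j
  proof (cases "i \<in> J \<or> j \<notin> J")
    case True then show ?thesis by (auto simp: C_def)
  next
    case False
    then have iJ: "i \<notin> J" and jJ: "j \<in> J" by auto
    have "\<bar>E i j\<bar> \<le> 1" using E iJ unfolding adm_def by auto
    moreover have "\<bar>E i i\<bar> = 1" using Eii[OF iJ] by auto
    ultimately have "\<bar>E i i * E i j\<bar> \<le> 1" by (simp add: abs_mult)
    then have "\<bar>real_of_int (E i i * E i j)\<bar> \<le> 1" by linarith
    then show ?thesis using iJ jJ by (simp add: C_def)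
  qed
  have C2: "C i j = 0" if "j \<notin> J" for i j using that by (auto simp: C_def)
  have C3: "C i j = (if j = i then 1 else 0)" if "i \<in> J" for i j using that by (simp add: C_def)
  have C4: "\<bar>a$i - (\<Sum>j\<in>UNIV. C i j * a$j)\<bar> \<le> \<eta>0" for i
  proof (cases "i \<in> J")
    case True
    have "(\<Sum>j\<in>UNIV. C i j * a$j) = (\<Sum>j\<in>UNIV. if j = i then a$j else 0)"
      by (rule sum.cong) (auto simp: C3[OF True])
    also have "\<dots> = a$i" by simp
    finally show ?thesis using eta0 by simp
  next
    case False
    have ad: "adm (insert i J) (E i)" and sb: "\<bar>sa (E i)\<bar> \<le> \<eta>0" using E False by auto
    define t where "t = (\<Sum>j\<in>J. of_int (E i j) * a$j)"
    have "sa (E i) = (\<Sum>j\<in>insert i J. of_int (E i j) * a$j)"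
      unfolding sa_def by (rule sum.mono_neutral_right) (use ad in \<open>auto simp: adm_def\<close>)
    also have "\<dots> = of_int (E i i) * a$i + t" unfolding t_def using False by (simp add: sum.insert)
    finally have s_eq: "sa (E i) = of_int (E i i) * a$i + t" .
    have "(\<Sum>j\<in>UNIV. C i j * a$j) = (\<Sum>j\<in>J. C i j * a$j)"
      by (rule sum.mono_neutral_right) (auto simp: C2)
    also have "\<dots> = (\<Sum>j\<in>J. - of_int (E i i) * (of_int (E i j) * a$j))"
      by (rule sum.cong) (use False in \<open>auto simp: C_def\<close>)
    also have "\<dots> = - of_int (E i i) * t" unfolding t_def by (simp add: sum_distrib_left)
    finally have c_eq: "(\<Sum>j\<in>UNIV. C i j * a$j) = - of_int (E i i) * t" .
    have sq: "real_of_int (E i i) * real_of_int (E i i) = 1" using Eii[OF False] by auto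
    have "a$i - (\<Sum>j\<in>UNIV. C i j * a$j) = of_int (E i i) * sa (E i)"
      unfolding c_eq s_eq by (simp add: algebra_simps sq flip: mult.assoc)
    moreover have "\<bar>real_of_int (E i i)\<bar> = 1" using Eii[OF False] by auto
    ultimately show ?thesis using sb by (simp add: abs_mult)
  qed
  define P where "P x = (\<chi> j. \<Sum>i\<in>UNIV. C i j * x$i)" for x :: "real^'n"
  define w :: "real^'n" where "w = (\<chi> j. if j \<in> J then a$j else 0)"
  have wJ: "w$i = 0" if "i \<notin> J" for i using that by (simp add: w_def)
  have wP: "w \<bullet> P x = (\<Sum>i\<in>UNIV. x$i * (\<Sum>j\<in>UNIV. C i j * a$j))" for x
  proof -
    have "w \<bullet> P x = (\<Sum>j\<in>UNIV. \<Sum>i\<in>UNIV. w$j * (C i j * x$i))"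
      by (simp add: inner_vec_def P_def sum_distrib_left)
    also have "\<dots> = (\<Sum>j\<in>UNIV. \<Sum>i\<in>UNIV. x$i * (C i j * a$j))"
      by (intro sum.cong refl) (auto simp: w_def C2)
    also have "\<dots> = (\<Sum>i\<in>UNIV. \<Sum>j\<in>UNIV. x$i * (C i j * a$j))" by (rule sum.swap)
    also have "\<dots> = (\<Sum>i\<in>UNIV. x$i * (\<Sum>j\<in>UNIV. C i j * a$j))" by (simp add: sum_distrib_left)
    finally show ?thesis .
  qed
  have Pgrid: "(P x)$j \<in> \<int> \<and> \<bar>(P x)$j\<bar> \<le> real N" if x: "x \<in> G" for x j
  proof
    show "(P x)$j \<in> \<int>" unfolding P_def using C1 grid[OF x] by (auto intro!: Ints_sum Ints_mult)
    have "\<bar>(P x)$j\<bar> \<le> (\<Sum>i\<in>UNIV. \<bar>C i j * x$i\<bar>)" unfolding P_def by (simp add: sum_abs)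
    also have "\<dots> \<le> (\<Sum>i\<in>(UNIV::'n set). 1)"
    proof (rule sum_mono)
      fix i
      have "\<bar>C i j\<bar> \<le> 1" "\<bar>x$i\<bar> \<le> 1" using C1 grid[OF x] by auto
      then show "\<bar>C i j * x$i\<bar> \<le> 1" by (simp add: abs_mult mult_le_one)
    qed
    finally show "\<bar>(P x)$j\<bar> \<le> real N" unfolding N_def by simp
  qed
  define T where "T = G \<inter> neighborhood H \<beta>"
  have nearP: "\<bar>w \<bullet> P x - b\<bar> \<le> (real N + 1) * \<eta>0" if x: "x \<in> T" for x
  proof -
    have xg: "x \<in> G" and xn: "x \<in> neighborhood H \<beta>" using x unfolding T_def by auto
    have "a \<bullet> x - w \<bullet> P x = (\<Sum>i\<in>UNIV. x$i * (a$i - (\<Sum>j\<in>UNIV. C i j * a$j)))"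
      unfolding wP by (simp add: inner_vec_def algebra_simps sum_subtractf)
    also have "\<bar>\<dots>\<bar> \<le> (\<Sum>i\<in>UNIV. \<bar>x$i * (a$i - (\<Sum>j\<in>UNIV. C i j * a$j))\<bar>)" by (rule sum_abs)
    also have "\<dots> \<le> (\<Sum>i\<in>(UNIV::'n set). \<eta>0)"
    proof (rule sum_mono)
      fix i
      have "\<bar>x$i\<bar> \<le> 1" using grid[OF xg] by auto
      then have "\<bar>x$i\<bar> * \<bar>a$i - (\<Sum>j\<in>UNIV. C i j * a$j)\<bar> \<le> 1 * \<eta>0"
        using C4[of i] by (intro mult_mono) auto
      then show "\<bar>x$i * (a$i - (\<Sum>j\<in>UNIV. C i j * a$j))\<bar> \<le> \<eta>0" by (simp add: abs_mult)
    qed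
    also have "\<dots> = real N * \<eta>0" unfolding N_def by simp
    finally have "\<bar>a \<bullet> x - w \<bullet> P x\<bar> \<le> real N * \<eta>0" .
    moreover have "\<bar>a \<bullet> x - b\<bar> \<le> \<eta>0" using near[OF xn] .
    ultimately show ?thesis by (simp add: algebra_simps)
  qed
  show ?thesis
  proof (cases "T = {}")
    case True
    then show ?thesis using assms(1) unfolding T_def G_def by auto
  next
    case False
    then obtain x0 where x0: "x0 \<in> T" by auto
    have x0G: "x0 \<in> G" using x0 unfolding T_def by auto
    define Y where "Y = (\<lambda>x. P x - P x0) ` T"
    define Ax where "Ax = (\<lambda>i. axis i (1::real)) ` (UNIV - J)"
    show ?thesis
    proof (cases "span (Y \<union> Ax) = UNIV")
      case True
      define K where "K = fact m * ((2 * real N)^(m-1) * (2 * (real N + 1) * \<eta>0))"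
      have Yint: "y$i \<in> \<int>" if "y \<in> Y" for y i
        using that Pgrid x0G unfolding Y_def T_def by auto
      have Ybd: "\<bar>y$i\<bar> \<le> 2 * real N" if yY: "y \<in> Y" for y i
      proof -
        obtain x where x: "x \<in> T" "y = P x - P x0" using yY unfolding Y_def by auto
        have "\<bar>(P x)$i\<bar> \<le> real N" "\<bar>(P x0)$i\<bar> \<le> real N"
          using Pgrid x x0G unfolding T_def by auto
        then show ?thesis using x by simp
      qed
      have Yw: "\<bar>w \<bullet> y\<bar> \<le> 2 * (real N + 1) * \<eta>0" if yY: "y \<in> Y" for y
      proof -
        obtain x where x: "x \<in> T" "y = P x - P x0" using yY unfolding Y_def by auto
        have "\<bar>w \<bullet> P x - b\<bar> \<le> (real N + 1) * \<eta>0" "\<bar>w \<bullet> P x0 - b\<bar> \<le> (real N + 1) * \<eta>0"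
          using nearP x x0 by auto
        moreover have "w \<bullet> y = w \<bullet> P x - w \<bullet> P x0" using x by (simp add: inner_diff_right)
        moreover have "2 * (real N + 1) * \<eta>0 = (real N + 1) * \<eta>0 + (real N + 1) * \<eta>0" by simp
        ultimately show ?thesis by linarith
      qed
      have wk: "\<bar>w$k\<bar> \<le> K" for k
        using cramer_bound[OF wJ Yint Ybd Yw True[unfolded Ax_def]] cJ eta0 N1
        unfolding K_def by simp
      have K0: "K \<ge> 0" using wk[of undefined] by linarith
      have ai: "\<bar>a$i\<bar> \<le> real m * K + \<eta>0" for i
      proof -
        have "(\<Sum>j\<in>UNIV. C i j * a$j) = (\<Sum>j\<in>UNIV. C i j * w$j)"
          by (rule sum.cong) (auto simp: w_def C2)
        also have "\<bar>\<dots>\<bar> \<le> (\<Sum>j\<in>UNIV. \<bar>C i j * w$j\<bar>)" by (rule sum_abs)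
        also have "\<dots> \<le> (\<Sum>j\<in>UNIV. if j \<in> J then K else 0)"
        proof (rule sum_mono)
          fix j
          show "\<bar>C i j * w$j\<bar> \<le> (if j \<in> J then K else 0)"
          proof (cases "j \<in> J")
            case True
            have "\<bar>C i j\<bar> * \<bar>w$j\<bar> \<le> 1 * K" using C1[of i j] wk[of j] by (intro mult_mono) auto
            then show ?thesis using True by (simp add: abs_mult)
          qed (simp add: C2)
        qed
        also have "\<dots> = real m * K" using cJ by (simp add: sum.If_cases)
        finally have "\<bar>\<Sum>j\<in>UNIV. C i j * a$j\<bar> \<le> real m * K" .
        then show ?thesis using C4[of i] by linarith
      qed
      have "norm a \<le> (\<Sum>i\<in>UNIV. \<bar>a$i\<bar>)" by (rule norm_le_l1_cart)
      also have "\<dots> \<le> real N * (real m * K + \<eta>0)"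
        using sum_bounded_above[of UNIV "\<lambda>i. \<bar>a$i\<bar>" "real m * K + \<eta>0"] ai unfolding N_def by auto
      also have "\<dots> = norm a * (real N * (real m * (fact m * ((2 * real N)^(m-1) * (2*(real N+1)*\<beta>))) + \<beta>))"
        unfolding K_def \<eta>0_def by (simp add: algebra_simps)
      finally have le: "norm a * 1 \<le> norm a * (real N * (real m * (fact m * ((2 * real N)^(m-1) * (2*(real N+1)*\<beta>))) + \<beta>))"
        by simp
      have "real N * (real m * (fact m * ((2 * real N)^(m-1) * (2*(real N+1)*\<beta>))) + \<beta>) < 1"
        by (rule final_arith[OF N1 mk assms(4) am assms(6)]) (use assms(7) in \<open>simp add: N_def kk_def\<close>)
      then have False using le na by (simp add: mult_le_cancel_left_pos)
      then show ?thesis ..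
    next
      case False
      have "span (Y \<union> Ax) \<subset> span UNIV" using False by auto
      then obtain c :: "real^'n" where c0: "c \<noteq> 0"
        and corth: "\<And>y. y \<in> span (Y \<union> Ax) \<Longrightarrow> orthogonal c y"
        using orthogonal_to_subspace_exists_gen by blast
      have cJ0: "c$i = 0" if "i \<notin> J" for i
      proof -
        have "axis i 1 \<in> span (Y \<union> Ax)" using that unfolding Ax_def by (auto intro: span_base)
        then have "c \<bullet> axis i 1 = 0" using corth orthogonal_def by blast
        then show ?thesis by (simp add: inner_axis)
      qed
      have cY: "c \<bullet> P x = c \<bullet> P x0" if "x \<in> T" for x
      proof -
        have "P x - P x0 \<in> span (Y \<union> Ax)" using that unfolding Y_def by (auto intro: span_base)
        then have "c \<bullet> (P x - P x0) = 0" using corth orthogonal_def by blast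
        then show ?thesis by (simp add: inner_diff_right)
      qed
      define a' :: "real^'n" where "a' = (\<chi> i. \<Sum>j\<in>UNIV. C i j * c$j)"
      have a'x: "a' \<bullet> x = c \<bullet> P x" for x
      proof -
        have "a' \<bullet> x = (\<Sum>i\<in>UNIV. \<Sum>j\<in>UNIV. C i j * c$j * x$i)"
          by (simp add: inner_vec_def a'_def sum_distrib_right)
        also have "\<dots> = (\<Sum>j\<in>UNIV. \<Sum>i\<in>UNIV. C i j * c$j * x$i)" by (rule sum.swap)
        also have "\<dots> = c \<bullet> P x"
          by (simp add: inner_vec_def P_def sum_distrib_left mult_ac)
        finally show ?thesis .
      qed
      have a'0: "a' \<noteq> 0"
      proof
        assume z: "a' = 0"
        obtain j where j: "c$j \<noteq> 0" using c0 by (auto simp: vec_eq_iff)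
        then have jJ: "j \<in> J" using cJ0 by blast
        have "a'$j = (\<Sum>l\<in>UNIV. C j l * c$l)" unfolding a'_def by simp
        also have "\<dots> = (\<Sum>l\<in>UNIV. (if l = j then c$l else 0))"
          by (rule sum.cong) (auto simp: C3[OF jJ])
        also have "\<dots> = c$j" by simp
        finally show False using z j by simp
      qed
      have "is_hyperplane {x. a' \<bullet> x = c \<bullet> P x0}" unfolding is_hyperplane_def using a'0 by blast
      moreover have "(cube_pm \<union> cube01) \<inter> neighborhood H \<beta> \<subseteq> {x. a' \<bullet> x = c \<bullet> P x0}"
        using cY a'x unfolding T_def G_def by auto
      ultimately show ?thesis by blast
    qed
  qed
qed

end
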